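(* Let $(\mathcal Q,d)$ be a Hadamard space, let $\gamma:I_\gamma\to\mathcal Q$ be a unit-speed geodesic and let $y\in\mathcal Q$. Then the function $I_\gamma\to\mathbb R$, $t\mapsto d(y,\gamma(t))$, is $\mathcal G$-convex.
   Context: A Hadamard space is a complete metric space $(\mathcal Q,d)$ such that for all $y_0,y_1$ there is $m$ with $\frac12 d(y_0,q)^2+\frac12 d(y_1,q)^2-\frac14 d(y_0,y_1)^2\ge d(q,m)^2$ for all $q$. A unit-speed geodesic is a map $\gamma:I_\gamma\to\mathcal Q$ on an interval $I_\gamma\subset\mathbb R$ with $d(\gamma(s),\gamma(t))=|s-t|$. $\mathcal G:=\{t\mapsto\sqrt{(t-t_0)^2+h^2}:\ t_0\in\mathbb R,\ h\ge0\}$; a function $f:I\to\mathbb R$ on an interval $I$ is $\mathcal G$-convex if for every $t_0\in I$ there is $g\in\mathcal G$ with $g(t_0)=f(t_0)$ and $g(s)\le f(s)$ for all $s\in I$. *)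

theory Defs
  imports "HOL-Analysis.Analysis"
begin

definition hadamard_space :: "'a::{metric_space,complete_space} itself \<Rightarrow> bool" where
  "hadamard_space _ \<longleftrightarrow>
     (\<forall>y0 y1 :: 'a. \<exists>m :: 'a. \<forall>q :: 'a.
        (1/2) * (dist y0 q)^2 + (1/2) * (dist y1 q)^2 - (1/4) * (dist y0 y1)^2 \<ge> (dist q m)^2)"

definition unit_speed_geodesic :: "real set \<Rightarrow> (real \<Rightarrow> 'a::metric_space) \<Rightarrow> bool" where
  "unit_speed_geodesic I \<gamma> \<longleftrightarrow> is_interval I \<and>
     (\<forall>s\<in>I. \<forall>t\<in>I. dist (\<gamma> s) (\<gamma> t) = \<bar>s - t\<bar>)"

definition G_family :: "(real \<Rightarrow> real) set" where
  "G_family = {g. \<exists>t0 h :: real. h \<ge> 0 \<and> g = (\<lambda>t. sqrt ((t - t0)^2 + h^2))}"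

definition G_convex :: "real set \<Rightarrow> (real \<Rightarrow> real) \<Rightarrow> bool" where
  "G_convex I f \<longleftrightarrow> is_interval I \<and>
     (\<forall>t0\<in>I. \<exists>g\<in>G_family. g t0 = f t0 \<and> (\<forall>s\<in>I. g s \<le> f s))"

end

theory Submission
  imports Defs
begin

lemma aux_lin:
  fixes L Lx Ly H Hx Hy :: real
  shows "L = (Lx+Ly)/2 \<Longrightarrow> H \<le> (Hx+Hy)/2 \<Longrightarrow> H - L \<le> (Hx-Lx + (Hy-Ly))/2"
  by argo

lemma aux2:
  fixes P X Y D F A B :: real
  shows "P = (1/2)*X + (1/2)*Y - (1/4)*D \<Longrightarrow> F \<le> (1/2)*A + (1/2)*B - (1/4)*D \<Longrightarrow> F - P \<le> (A - X + (B - Y))/2"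
  by (simp add: field_simps)

lemma midconv:
  fixes h :: "real \<Rightarrow> real" and a b :: real
  assumes ab: "a < b" and cont: "continuous_on {a..b} h"
    and mid: "\<And>x y. x \<in> {a..b} \<Longrightarrow> y \<in> {a..b} \<Longrightarrow> h ((x+y)/2) \<le> (h x + h y)/2"
    and t: "t \<in> {a..b}"
  shows "h t \<le> ((b-t) * h a + (t-a) * h b)/(b-a)"
proof (rule ccontr)
  assume neg: "\<not> ?thesis"
  define k where "k s = h s - ((b-s) * h a + (s-a) * h b)/(b-a)" for s
  have ka: "k a = 0" and kb: "k b = 0" using ab by (auto simp: k_def field_simps)
  have kt: "k t > 0" using neg by (simp add: k_def)
  have kcont: "continuous_on {a..b} k" unfolding k_def
    using ab by (intro continuous_intros cont) auto
  have kmid: "k ((x+y)/2) \<le> (k x + k y)/2" if "x \<in> {a..b}" "y \<in> {a..b}" for x y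
  proof -
    define lin where "lin s = ((b-s) * h a + (s-a) * h b)/(b-a)" for s
    have kk: "k s = h s - lin s" for s by (simp add: k_def lin_def)
    have "lin ((x+y)/2) = (lin x + lin y)/2"
      unfolding lin_def using ab by (simp add: divide_simps) (simp add: algebra_simps)
    moreover have "h ((x+y)/2) \<le> (h x + h y)/2" using mid[OF that] .
    ultimately show ?thesis unfolding kk by (rule aux_lin)
  qed
  obtain c0 where c0: "c0 \<in> {a..b}" and c0max: "\<forall>s\<in>{a..b}. k s \<le> k c0"
    using continuous_attains_sup[OF compact_Icc _ kcont] ab by auto
  define M where "M = k c0"
  have Mpos: "M > 0" using c0max t kt M_def by force
  define S where "S = {s \<in> {a..b}. k s = M}"
  have Sclosed: "closed S" unfolding S_def
    by (rule continuous_closed_preimage_constant[OF kcont closed_atLeastAtMost])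
  have Sne: "S \<noteq> {}" using c0 M_def S_def by auto
  have Sbdd: "bdd_below S" unfolding S_def by (rule bdd_belowI[of _ a]) auto
  define c where "c = Inf S"
  have cS: "c \<in> S" unfolding c_def by (rule closed_contains_Inf[OF Sne Sbdd Sclosed])
  have cleast: "c \<le> s" if "s \<in> S" for s unfolding c_def by (rule cInf_lower[OF that Sbdd])
  have c1: "c \<in> {a..b}" "k c = M" using cS S_def by auto
  have cna: "c \<noteq> a" using c1 ka Mpos by auto
  have cnb: "c \<noteq> b" using c1 kb Mpos by auto
  define d where "d = min (c-a) (b-c)"
  have dpos: "d > 0" using c1 cna cnb d_def by auto
  have l: "c - d \<in> {a..b}" and r: "c + d \<in> {a..b}" using c1 dpos d_def by auto
  have "k (c-d) \<noteq> M"
  proof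
    assume "k (c-d) = M"
    then have "c - d \<in> S" using l S_def by auto
    then show False using cleast dpos by fastforce
  qed
  then have kl: "k (c-d) < M" using c0max l M_def by force
  have kr: "k (c+d) \<le> M" using c0max r M_def by force
  have "k c \<le> (k (c-d) + k (c+d))/2" using kmid[OF l r] by simp
  then show False using kl kr c1 by argo
qed

lemma slopeC: fixes x t z a b c :: real
  assumes "x < t" "t < z" "b*(z-x) \<le> (z-t)*a + (t-x)*c"
  shows "(a-c)/(x-z) \<le> (b-c)/(t-z)"
proof -
  have "(a-c)/(x-z) = (c-a)/(z-x)" by (simp add: divide_simps) (simp add: algebra_simps)
  also have "\<dots> \<le> (c-b)/(z-t)"
    using assms by (simp add: divide_simps) (simp add: algebra_simps)
  also have "\<dots> = (b-c)/(t-z)" by (simp add: divide_simps) (simp add: algebra_simps)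
  finally show ?thesis .
qed
lemma PQ: fixes s t0 fs f0 :: real assumes "s \<noteq> t0"
  shows "(fs^2 - f0^2)/(s-t0) - (s-t0) = ((fs^2 - s^2) - (f0^2 - t0^2))/(s-t0) + 2*t0"
  using assms by (simp add: divide_simps) (simp add: algebra_simps power2_eq_square)

lemma aux3: fixes QV QS F D E :: real
  shows "QV \<le> QS \<Longrightarrow> -2*F - 2*D \<le> QV \<Longrightarrow> D \<le> E/4 \<Longrightarrow> E = -2*F - QS \<Longrightarrow> 0 < E \<Longrightarrow> False"
  by linarith
lemma aux4: fixes QV QS F D E :: real
  shows "QS \<le> QV \<Longrightarrow> QV \<le> 2*F + 2*D \<Longrightarrow> D \<le> E/4 \<Longrightarrow> E = QS - 2*F \<Longrightarrow> 0 < E \<Longrightarrow> False"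
  by linarith

lemma slopeA: fixes x t z a b c :: real
  assumes "x < t" "t < z" "b*(z-x) \<le> (z-t)*a + (t-x)*c"
  shows "(a-b)/(x-t) \<le> (c-b)/(z-t)"
proof -
  have "(a-b)/(x-t) = (b-a)/(t-x)" by (simp add: divide_simps) (simp add: algebra_simps)
  also have "\<dots> \<le> (c-b)/(z-t)"
    using assms by (simp add: divide_simps) (simp add: algebra_simps)
  finally show ?thesis .
qed
lemma slopeB: fixes x t z a b c :: real
  assumes "x < t" "t < z" "b*(z-x) \<le> (z-t)*a + (t-x)*c"
  shows "(b-a)/(t-x) \<le> (c-a)/(z-x)"
  using assms by (simp add: divide_simps) (simp add: algebra_simps)
lemma sqbound: fixes A B u :: real
  assumes "A \<ge> 0" "B \<ge> 0" "\<bar>A - B\<bar> \<le> u"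
  shows "\<bar>A^2 - B^2\<bar> \<le> u*(2*B+u)"
proof -
  have "A^2 - B^2 = (A-B)*(A+B)" by (simp add: power2_eq_square algebra_simps)
  hence "\<bar>A^2 - B^2\<bar> = \<bar>A-B\<bar>*(A+B)" using assms by (simp add: abs_mult)
  also have "\<dots> \<le> u*(2*B+u)" using assms by (intro mult_mono) auto
  finally show ?thesis .
qed

theorem mainTheorem15:
  fixes \<gamma> :: "real \<Rightarrow> 'a::{metric_space,complete_space}"
    and I :: "real set" and y :: 'a
  assumes "hadamard_space TYPE('a)"
    and "unit_speed_geodesic I \<gamma>"
  shows "G_convex I (\<lambda>t. dist y (\<gamma> t))"
proof -
  have ivl: "is_interval I" and geo: "\<And>s t. s \<in> I \<Longrightarrow> t \<in> I \<Longrightarrow> dist (\<gamma> s) (\<gamma> t) = \<bar>s - t\<bar>"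
    using assms(2) unfolding unit_speed_geodesic_def by auto
  have had: "\<exists>m. \<forall>q. (1/2) * (dist y0 q)^2 + (1/2) * (dist y1 q)^2 - (1/4) * (dist y0 y1)^2 \<ge> (dist q m)^2"
    for y0 y1 :: 'a using assms(1) unfolding hadamard_space_def by blast
  define f where "f t = dist y (\<gamma> t)" for t
  have f0: "f t \<ge> 0" for t by (simp add: f_def)
  have lip: "\<bar>f s - f t\<bar> \<le> \<bar>s - t\<bar>" if "s \<in> I" "t \<in> I" for s t
  proof -
    have "\<bar>f s - f t\<bar> \<le> dist (\<gamma> s) (\<gamma> t)" unfolding f_def
      using abs_dist_diff_le[of "\<gamma> s" y "\<gamma> t"] by (simp add: dist_commute)
    thus ?thesis using geo[OF that] by simp
  qed
  have midI: "(a+b)/2 \<in> I" if "a \<in> I" "b \<in> I" for a b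
  proof (cases "a \<le> b")
    case True thus ?thesis using mem_is_interval_1_I[OF ivl that] by auto
  next
    case False thus ?thesis using mem_is_interval_1_I[OF ivl that(2) that(1)] by auto
  qed
  have midf: "(f ((a+b)/2))^2 \<le> (1/2)*(f a)^2 + (1/2)*(f b)^2 - (1/4)*(a-b)^2"
    if ab: "a \<in> I" "b \<in> I" for a b
  proof -
    define c where "c = (a+b)/2"
    have cI: "c \<in> I" unfolding c_def by (rule midI[OF ab])
    obtain m where m: "\<And>q. (1/2) * (dist (\<gamma> a) q)^2 + (1/2) * (dist (\<gamma> b) q)^2
        - (1/4) * (dist (\<gamma> a) (\<gamma> b))^2 \<ge> (dist q m)^2"
      using had by blast
    have "(dist (\<gamma> c) m)^2 \<le> (1/2) * (a-c)^2 + (1/2) * (b-c)^2 - (1/4) * (a-b)^2"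
      using m[of "\<gamma> c"] geo[OF ab(1) cI] geo[OF ab(2) cI] geo[OF ab] by (simp add: power2_abs)
    also have "\<dots> = 0" unfolding c_def by (simp add: power2_eq_square algebra_simps)
    finally have "\<gamma> c = m" by simp
    moreover have "(dist y m)^2 \<le> (1/2) * (dist (\<gamma> a) y)^2 + (1/2) * (dist (\<gamma> b) y)^2
        - (1/4) * (dist (\<gamma> a) (\<gamma> b))^2"
      using m[of y] by (simp add: dist_commute)
    ultimately show ?thesis using geo[OF ab] unfolding f_def c_def
      by (simp add: dist_commute power2_abs)
  qed
  define \<psi> where "\<psi> t = (f t)^2 - t^2" for t
  have gcont: "continuous_on I \<gamma>"
    unfolding continuous_on_iff
  proof (intro ballI allI impI)
    fix x e assume "x \<in> I" "(e::real) > 0"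
    show "\<exists>d>0. \<forall>x'\<in>I. dist x' x < d \<longrightarrow> dist (\<gamma> x') (\<gamma> x) < e"
      using geo \<open>x \<in> I\<close> \<open>e > 0\<close> by (intro exI[of _ e]) (auto simp: dist_real_def)
  qed
  have pcont: "continuous_on I \<psi>" unfolding \<psi>_def f_def
    by (intro continuous_intros gcont)
  have three: "\<psi> t * (z-x) \<le> (z-t) * \<psi> x + (t-x) * \<psi> z"
    if "x \<in> I" "z \<in> I" "x < z" "x \<le> t" "t \<le> z" for x t z
  proof -
    have sub: "{x..z} \<subseteq> I" using mem_is_interval_1_I[OF ivl that(1,2)] by auto
    have "\<psi> t \<le> ((z-t) * \<psi> x + (t-x) * \<psi> z)/(z-x)"
    proof (rule midconv)
      show "continuous_on {x..z} \<psi>" using pcont sub continuous_on_subset by blast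
      show "\<psi> ((u+v)/2) \<le> (\<psi> u + \<psi> v)/2" if "u \<in> {x..z}" "v \<in> {x..z}" for u v
      proof -
        have "((u+v)/2) ^ 2 = (1/2)*u ^ 2 + (1/2)* v ^ 2 - (1/4)*(u-v) ^ 2"
          by (simp add: power2_eq_square algebra_simps)
        moreover have "u \<in> I" "v \<in> I" using that sub by auto
        ultimately show ?thesis using midf[of u v] unfolding \<psi>_def by (intro aux2) auto
      qed
    qed (use that in auto)
    thus ?thesis using that by (simp add: divide_simps mult.commute)
  qed
  show ?thesis unfolding G_convex_def
  proof (intro conjI ivl ballI)
    fix t0 assume t0: "t0 \<in> I"
    define f0 where "f0 = f t0"
    have f0nn: "f0 \<ge> 0" using f0 f0_def by simp
    define P where "P s = (\<psi> s - \<psi> t0)/(s - t0)" for s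
    define Q where "Q s = ((f s)^2 - f0^2)/(s-t0) - (s-t0)" for s
    have PQe: "Q s = P s + 2*t0" if "s \<noteq> t0" for s
      unfolding Q_def P_def \<psi>_def f0_def using PQ[OF that] by simp
    have mA: "P x \<le> P z" if "x \<in> I" "z \<in> I" "x < t0" "t0 < z" for x z
      unfolding P_def using slopeA[OF that(3,4) three[of x z t0]] that by auto
    have mB: "P v \<le> P u" if "u \<in> I" "t0 < v" "v < u" for u v
      unfolding P_def using slopeB[OF that(2,3) three[of t0 u v]] that t0 by auto
    have mC: "P x \<le> P w" if "x \<in> I" "x < w" "w < t0" for x w
      unfolding P_def using slopeC[OF that(2,3) three[of x t0 w]] that t0 by auto
    have sq: "\<bar>(f s)^2 - f0^2\<bar> \<le> \<bar>s-t0\<bar>*(2*f0 + \<bar>s-t0\<bar>)" if "s \<in> I" for s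
      using sqbound[OF f0 f0nn] lip[OF that t0] unfolding f0_def by blast
    have R1: "Q s \<le> 2*f0" and R2: "Q s \<ge> -2*f0 - 2*(s-t0)" if "s \<in> I" "s > t0" for s
    proof -
      have h: "\<bar>(f s)^2 - f0^2\<bar> \<le> (s-t0)*(2*f0 + (s-t0))" using sq[OF that(1)] that by simp
      have "((f s)^2 - f0^2)/(s-t0) \<le> 2*f0 + (s-t0)"
        using h that by (simp add: pos_divide_le_eq mult.commute)
      thus "Q s \<le> 2*f0" unfolding Q_def by simp
      have h2: "(-(2*f0 + (s-t0)))*(s-t0) \<le> (f s)^2 - f0^2"
        using h by (simp add: abs_le_iff algebra_simps)
      have "-(2*f0 + (s-t0)) \<le> ((f s)^2 - f0^2)/(s-t0)"
        by (rule pos_le_divide_eq[THEN iffD2]) (use that h2 in auto)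
      thus "Q s \<ge> -2*f0 - 2*(s-t0)" unfolding Q_def by simp
    qed
    have L1: "Q s \<ge> -2*f0" and L2: "Q s \<le> 2*f0 + 2*(t0-s)" if "s \<in> I" "s < t0" for s
    proof -
      have h: "\<bar>(f s)^2 - f0^2\<bar> \<le> (t0-s)*(2*f0 + (t0-s))" using sq[OF that(1)] that by simp
      have e: "((f s)^2 - f0^2)/(s-t0) = (f0^2 - (f s)^2)/(t0-s)"
        by (simp add: divide_simps) (simp add: algebra_simps)
      have h2: "(-(2*f0 + (t0-s)))*(t0-s) \<le> f0^2 - (f s)^2"
        using h by (simp add: abs_le_iff algebra_simps)
      have "-(2*f0 + (t0-s)) \<le> (f0^2 - (f s)^2)/(t0-s)"
        by (rule pos_le_divide_eq[THEN iffD2]) (use that h2 in auto)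
      thus "Q s \<ge> -2*f0" unfolding Q_def e by simp
      have "(f0^2 - (f s)^2)/(t0-s) \<le> 2*f0 + (t0-s)"
        using h that by (simp add: pos_divide_le_eq mult.commute)
      thus "Q s \<le> 2*f0 + 2*(t0-s)" unfolding Q_def e by simp
    qed
    have R3: "Q s \<ge> -2*f0" if sI: "s \<in> I" and st: "s > t0" for s
    proof (rule ccontr)
      assume neg: "\<not> ?thesis"
      define e where "e = -2*f0 - Q s"
      have epos: "e > 0" using neg e_def by simp
      define v where "v = t0 + min (s-t0) (e/4)"
      have v1: "t0 < v" "v \<le> s" using epos st v_def by auto
      have vI: "v \<in> I" using mem_is_interval_1_I[OF ivl t0 sI] v1 by auto
      have "P v \<le> P s" using mB[OF sI v1(1)] v1 by (cases "v = s") auto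
      hence x1: "Q v \<le> Q s" using PQe v1 st by force
      have x2: "Q v \<ge> -2*f0 - 2*(v-t0)" using R2[OF vI v1(1)] .
      have x3: "v - t0 \<le> e/4" unfolding v_def by (simp add: min_def)
      show False by (rule aux3[OF x1 x2 x3 e_def epos])
    qed
    have L3: "Q s \<le> 2*f0" if sI: "s \<in> I" and st: "s < t0" for s
    proof (rule ccontr)
      assume neg: "\<not> ?thesis"
      define e where "e = Q s - 2*f0"
      have epos: "e > 0" using neg e_def by simp
      define w where "w = t0 - min (t0-s) (e/4)"
      have w1: "w < t0" "s \<le> w" using epos st w_def by auto
      have wI: "w \<in> I" using mem_is_interval_1_I[OF ivl sI t0] w1 by auto
      have "P s \<le> P w" using mC[OF sI _ w1(1)] w1 by (cases "w = s") auto
      hence x1: "Q s \<le> Q w" using PQe w1 st by force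
      have x2: "Q w \<le> 2*f0 + 2*(t0-w)" using L2[OF wI w1(1)] .
      have x3: "t0 - w \<le> e/4" unfolding w_def by (simp add: min_def)
      show False by (rule aux4[OF x1 x2 x3 e_def epos])
    qed
    define LS where "LS = insert (-2*f0-2*t0) (P ` {s\<in>I. s<t0})"
    define Bp where "Bp = Sup LS"
    have LSne: "LS \<noteq> {}" unfolding LS_def by simp
    have LSub: "x \<le> 2*f0 - 2*t0" if "x \<in> LS" for x
      using that f0nn L3 PQe unfolding LS_def by force
    have LSbdd: "bdd_above LS" using LSub by (rule bdd_aboveI)
    have Bp_ge: "x \<le> Bp" if "x \<in> LS" for x unfolding Bp_def by (rule cSup_upper[OF that LSbdd])
    have Bp_le: "Bp \<le> 2*f0 - 2*t0" unfolding Bp_def by (rule cSup_least[OF LSne LSub])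
    define B where "B = Bp + 2*t0"
    have Blo: "-2*f0 \<le> B" using Bp_ge[of "-2*f0-2*t0"] B_def LS_def by simp
    have Bhi: "B \<le> 2*f0" using Bp_le B_def by simp
    have key: "(f s)^2 \<ge> f0^2 + (s-t0)^2 + B*(s-t0)" if sI: "s \<in> I" for s
    proof -
      consider "s > t0" | "s = t0" | "s < t0" by linarith
      then show ?thesis
      proof cases
        case 1
        have "Bp \<le> P s" unfolding Bp_def
        proof (rule cSup_least[OF LSne])
          fix x assume "x \<in> LS"
          then consider "x = -2*f0-2*t0" | z where "z \<in> I" "z < t0" "x = P z"
            unfolding LS_def by auto
          then show "x \<le> P s"
          proof cases
            case 1 thus ?thesis using R3[OF sI \<open>s > t0\<close>] PQe[of s] \<open>s > t0\<close> by simp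
          next
            case 2 thus ?thesis using mA[of z s] sI \<open>s > t0\<close> by simp
          qed
        qed
        hence "B + (s-t0) \<le> ((f s)^2 - f0^2)/(s-t0)" using PQe[of s] 1 B_def Q_def by simp
        hence "(B + (s-t0))*(s-t0) \<le> (f s)^2 - f0^2" using 1 by (simp add: pos_le_divide_eq)
        thus ?thesis by (simp add: power2_eq_square algebra_simps)
      next
        case 2 thus ?thesis using f0_def by simp
      next
        case 3
        have "P s \<le> Bp" using Bp_ge[of "P s"] sI 3 LS_def by simp
        hence "((f s)^2 - f0^2)/(s-t0) \<le> B + (s-t0)" using PQe[of s] 3 B_def Q_def by simp
        hence "(B + (s-t0))*(s-t0) \<le> (f s)^2 - f0^2" using 3 by (simp add: neg_divide_le_eq)
        thus ?thesis by (simp add: power2_eq_square algebra_simps)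
      qed
    qed
    define a where "a = t0 - B/2"
    define hh where "hh = sqrt (f0^2 - (B/2)^2)"
    have Bsq: "(B/2)^2 \<le> f0^2" using Blo Bhi f0nn abs_le_square_iff[of "B/2" f0] by auto
    have hh2: "hh^2 = f0^2 - (B/2)^2" unfolding hh_def using Bsq by simp
    define g where "g t = sqrt ((t - a)^2 + hh^2)" for t
    have gG: "g \<in> G_family" unfolding G_family_def g_def hh_def
      using Bsq by (intro CollectI exI[of _ a] exI[of _ hh]) (auto simp: hh_def)
    have gs: "(s - a)^2 + hh^2 = f0^2 + (s-t0)^2 + B*(s-t0)" for s
      unfolding hh2 a_def by (simp add: power2_eq_square algebra_simps)
    show "\<exists>g\<in>G_family. g t0 = dist y (\<gamma> t0) \<and> (\<forall>s\<in>I. g s \<le> dist y (\<gamma> s))"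
    proof (intro bexI[OF _ gG] conjI ballI)
      show "g t0 = dist y (\<gamma> t0)" unfolding g_def gs using f0nn f0_def f_def by simp
      fix s assume sI: "s \<in> I"
      have "g s \<le> sqrt ((f s)^2)" unfolding g_def gs by (rule real_sqrt_le_mono[OF key[OF sI]])
      thus "g s \<le> dist y (\<gamma> s)" using f0[of s] f_def by simp
    qed
  qed
qed

end
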